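(* Assume the setting of Lemma 1: $\mathcal Q=\mathbb{R}^N$ with coordinates $(\lambda^1,\dots,\lambda^k,x^1,\dots,x^{N-k})$, constraints $\hat C_I=\hat p_I-\partial S/\partial\lambda^I$ with $S$ smooth real and $\hat p_I=-i\hbar\partial_{\lambda^I}$, and global gauge conditions $G_K(\lambda,x)=0$ ($K=1,\dots,k$) depending only on configuration variables, having for each $x$ a unique solution $\lambda^K=c^K(x)$ with nonvanishing $\det(\partial G_K/\partial\lambda^I)$. Define the physical inner product of $\psi^{\rm phys}=\prod_I\delta(\hat C_I)\psi^{\rm kin}$ and $\phi^{\rm phys}=\prod_I\delta(\hat C_I)\phi^{\rm kin}$ by $$\langle\psi^{\rm phys}|\phi^{\rm phys}\rangle_{\rm phys}:=\int_{\mathcal Q}d\lambda\,dx\,\big(\psi^{\rm kin}(\lambda,x)\big)^*\prod_{I=1}^k\delta(\hat C_I)\phi^{\rm kin}(\lambda,x).$$ Then $$\langle\psi^{\rm phys}|\phi^{\rm phys}\rangle_{\rm phys}=\int_{\mathcal Q}d\xi(\lambda,x)\,\big(\psi^{\rm phys}(\lambda,x)\big)^*\phi^{\rm phys}(\lambda,x)=(2\pi\hbar)^k\int_{\mathbb{R}^{N-k}}\prod_\alpha dx^\alpha\,\big(\psi^{\rm phys}(\lambda,x)\big)^*\phi^{\rm phys}(\lambda,x),$$ with the regularized (Faddeev–Popov) measure $$d\xi(\lambda,x):=(2\pi)^k\prod_{I,\alpha}d\lambda^I dx^\alpha\,\Big|\det\big([\hat G_K,\hat C_I]\big)\Big|\prod_{K=1}^k\delta\big(G_K(\lambda,x)\big),$$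 where the integrand in the last expression is independent of $\lambda$. The physical inner product is independent of the particular choice of gauge conditions $G_K$.
   Context: $\delta(\hat C):=\frac{1}{2\pi\hbar}\int_{\mathbb{R}}ds\,e^{is\hat C/\hbar}$ (improper group-averaging projector). $[\hat G_K,\hat C_I]=i\hbar\,\partial G_K/\partial\lambda^I$ is a multiplication operator and $\det$ denotes the determinant of the $k\times k$ matrix. Kinematical states lie in $L^2(\mathbb{R}^N,d\lambda\,dx)$ with standard Lebesgue measure, assumed such that all integrals converge; the physical inner product is well defined on equivalence classes of kinematical states having the same image under $\prod_I\delta(\hat C_I)$. *)

theory Defs
  imports "HOL-Analysis.Analysis"
begin

text \<open>Configuration space Q = R^N = R^k x R^(N-k), points (l, x) with
  l :: real^'k (the lambda^I) and x :: real^'m (the x^alpha).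
  Wave functions are maps real^'k => real^'m => complex.\<close>

definition jac :: "(real^'k \<Rightarrow> real^'k) \<Rightarrow> real^'k \<Rightarrow> real^'k^'k" where
  "jac F l = (\<chi> K I. deriv (\<lambda>t. F (l + t *\<^sub>R axis I 1) $ K) 0)"

text \<open>Unitary group generated by the constraints C_I = p_I - dS/dlambda^I,
  p_I = -i hbar d/dlambda^I:  prod_I exp(i s_I C_I / hbar).  Since
  C_I = e^(iS/hbar) p_I e^(-iS/hbar) and exp(i s p/hbar) is translation by s,
  this acts as below.\<close>
definition constr_flow ::
  "(real^'k \<Rightarrow> real^'m \<Rightarrow> real) \<Rightarrow> real \<Rightarrow> real^'k
    \<Rightarrow> (real^'k \<Rightarrow> real^'m \<Rightarrow> complex) \<Rightarrow> real^'k \<Rightarrow> real^'m \<Rightarrow> complex" where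
  "constr_flow S hb s \<psi> l x =
     exp (\<i> * complex_of_real (S l x / hb)) * exp (- \<i> * complex_of_real (S (l + s) x / hb))
       * \<psi> (l + s) x"

text \<open>Group-averaging projector prod_I delta(C_I), with
  delta(C) = 1/(2 pi hbar) int ds exp(i s C/hbar), i.e.
  (2 pi hbar)^(-k) int_{R^k} d^k s prod_I exp(i s_I C_I/hbar).\<close>
definition phys_proj ::
  "(real^'k \<Rightarrow> real^'m \<Rightarrow> real) \<Rightarrow> real
    \<Rightarrow> (real^'k \<Rightarrow> real^'m \<Rightarrow> complex) \<Rightarrow> real^'k \<Rightarrow> real^'m \<Rightarrow> complex" where
  "phys_proj S hb \<psi> l x =
     complex_of_real ((1 / (2 * pi * hb)) ^ CARD('k)) *
       (\<integral>s. constr_flow S hb s \<psi> l x \<partial>lborel)"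

definition phys_ip ::
  "(real^'k \<Rightarrow> real^'m \<Rightarrow> real) \<Rightarrow> real
    \<Rightarrow> (real^'k \<Rightarrow> real^'m \<Rightarrow> complex) \<Rightarrow> (real^'k \<Rightarrow> real^'m \<Rightarrow> complex) \<Rightarrow> complex" where
  "phys_ip S hb \<psi> \<phi> =
     (\<integral>p. cnj (\<psi> (fst p) (snd p)) * phys_proj S hb \<phi> (fst p) (snd p) \<partial>lborel)"

definition gauge_ok :: "(real^'k \<Rightarrow> real^'m \<Rightarrow> real^'k) \<Rightarrow> bool" where
  "gauge_ok G \<longleftrightarrow>
     (\<forall>x l. (\<lambda>l'. G l' x) differentiable (at l)) \<and>
     (\<forall>x. \<exists>!l. G l x = 0) \<and>
     (\<forall>x l. G l x = 0 \<longrightarrow> det (jac (\<lambda>l'. G l' x) l) \<noteq> 0)"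

text \<open>Matrix of commutators [G_K, C_I] = i hbar dG_K/dlambda^I
  (multiplication operators), row K, column I.\<close>
definition comm_mat ::
  "real \<Rightarrow> (real^'k \<Rightarrow> real^'m \<Rightarrow> real^'k) \<Rightarrow> real^'k \<Rightarrow> real^'m \<Rightarrow> complex^'k^'k" where
  "comm_mat hb G l x = (\<chi> K I. \<i> * complex_of_real hb * complex_of_real (jac (\<lambda>l'. G l' x) l $ K $ I))"

text \<open>Composition of the Dirac delta with a map F : R^k -> R^k having only
  regular zeros (pullback of delta): int d^k lambda prod_K delta(F_K(lambda)) f(lambda)
  = sum over zeros c of f(c)/|det dF(c)|.\<close>
definition delta_pull :: "(real^'k \<Rightarrow> real^'k) \<Rightarrow> (real^'k \<Rightarrow> complex) \<Rightarrow> complex" where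
  "delta_pull F f = (\<Sum>c\<in>{c. F c = 0}. f c / complex_of_real \<bar>det (jac F c)\<bar>)"

definition fp_ip ::
  "(real^'k \<Rightarrow> real^'m \<Rightarrow> real) \<Rightarrow> real \<Rightarrow> (real^'k \<Rightarrow> real^'m \<Rightarrow> real^'k)
    \<Rightarrow> (real^'k \<Rightarrow> real^'m \<Rightarrow> complex) \<Rightarrow> (real^'k \<Rightarrow> real^'m \<Rightarrow> complex) \<Rightarrow> complex" where
  "fp_ip S hb G \<psi> \<phi> =
     complex_of_real ((2 * pi) ^ CARD('k)) *
       (\<integral>x. delta_pull (\<lambda>l. G l x)
              (\<lambda>l. complex_of_real (cmod (det (comm_mat hb G l x)))
                    * cnj (phys_proj S hb \<psi> l x) * phys_proj S hb \<phi> l x) \<partial>lborel)"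

end

theory Submission
  imports Defs
begin

lemma gen1: fixes a b q d :: complex assumes "d \<noteq> 0" shows "(a * d) * (b * q) / d = (a * b) * q"
  using assms by (simp add: field_simps)

lemma gen2: fixes x :: real assumes "x \<noteq> 0" shows "x ^ n * ((1 / x) ^ n)\<^sup>2 = (1 / x) ^ n"
  using assms by (simp add: power2_eq_square power_one_over field_simps)

lemma integral_translate:
  fixes f :: "'a::euclidean_space \<Rightarrow> complex"
  shows "(\<integral>s. f (l + s) \<partial>lborel) = (\<integral>s. f s \<partial>lborel)"
proof (cases "f \<in> borel_measurable borel")
  case True
  have "integral\<^sup>L (distr lborel borel ((+) l)) f = (\<integral>s. f (l + s) \<partial>lborel)"
    by (rule integral_distr) (auto simp: True)
  then show ?thesis by (simp add: lborel_distr_plus)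
next
  case False
  have "(\<lambda>s. f (l + s)) \<notin> borel_measurable borel"
  proof
    assume m: "(\<lambda>s. f (l + s)) \<in> borel_measurable borel"
    have "(\<lambda>t. (\<lambda>s. f (l + s)) (t - l)) \<in> borel_measurable borel"
      by (rule measurable_compose[OF _ m]) simp
    then show False using False by simp
  qed
  then have "\<not> integrable lborel (\<lambda>s. f (l + s))" by auto
  moreover have "\<not> integrable lborel f" using False by auto
  ultimately show ?thesis by (simp add: not_integrable_integral_eq)
qed

definition PhiF :: "(real^'k \<Rightarrow> real^'m \<Rightarrow> real) \<Rightarrow> real
    \<Rightarrow> (real^'k \<Rightarrow> real^'m \<Rightarrow> complex) \<Rightarrow> real^'m \<Rightarrow> complex" where
  "PhiF S hb \<phi> x = (\<integral>s. exp (- \<i> * complex_of_real (S s x / hb)) * \<phi> s x \<partial>lborel)"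

lemma proj_eq:
  fixes \<phi> :: "real^'k \<Rightarrow> real^'m \<Rightarrow> complex"
  shows "phys_proj S hb \<phi> l x = complex_of_real ((1 / (2 * pi * hb)) ^ CARD('k))
     * exp (\<i> * complex_of_real (S l x / hb)) * PhiF S hb \<phi> x"
proof -
  have "(\<integral>s. constr_flow S hb s \<phi> l x \<partial>lborel)
     = (\<integral>s. exp (\<i> * complex_of_real (S l x / hb)) *
          ((\<lambda>t. exp (- \<i> * complex_of_real (S t x / hb)) * \<phi> t x) (l + s)) \<partial>lborel)"
    unfolding constr_flow_def by (simp add: mult.assoc)
  also have "\<dots> = exp (\<i> * complex_of_real (S l x / hb)) *
       (\<integral>s. (\<lambda>t. exp (- \<i> * complex_of_real (S t x / hb)) * \<phi> t x) (l + s) \<partial>lborel)"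
    by simp
  also have "\<dots> = exp (\<i> * complex_of_real (S l x / hb)) * PhiF S hb \<phi> x"
    unfolding PhiF_def by (subst integral_translate) simp
  finally show ?thesis unfolding phys_proj_def by (simp add: mult.assoc)
qed

lemma exp_unit: "cnj (exp (\<i> * complex_of_real a)) * exp (\<i> * complex_of_real a) = 1"
  by (simp add: exp_cnj exp_add[symmetric])

lemma prod_eq:
  fixes \<phi> \<psi> :: "real^'k \<Rightarrow> real^'m \<Rightarrow> complex"
  shows "cnj (phys_proj S hb \<psi> l x) * phys_proj S hb \<phi> l x
   = complex_of_real (((1 / (2 * pi * hb)) ^ CARD('k))^2) * (cnj (PhiF S hb \<psi> x) * PhiF S hb \<phi> x)"
proof -
  define c where "c = complex_of_real ((1 / (2 * pi * hb)) ^ CARD('k))"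
  define E where "E = exp (\<i> * complex_of_real (S l x / hb))"
  have cc: "cnj c = c" unfolding c_def by simp
  have "cnj (phys_proj S hb \<psi> l x) * phys_proj S hb \<phi> l x
     = c * c * (cnj E * E) * (cnj (PhiF S hb \<psi> x) * PhiF S hb \<phi> x)"
    unfolding proj_eq c_def[symmetric] E_def[symmetric] by (simp add: cc algebra_simps)
  also have "cnj E * E = 1" unfolding E_def by (rule exp_unit)
  finally show ?thesis unfolding c_def by (simp add: power2_eq_square)
qed

lemma det_of_real:
  "det (\<chi> i j. complex_of_real (A $ i $ j)) = complex_of_real (det (A :: real^'n^'n))"
  unfolding det_def by (simp add: of_real_sum of_real_prod)

lemma det_comm:
  "det (comm_mat hb G l x :: complex^'k^'k) =
     (\<i> * complex_of_real hb) ^ CARD('k) * complex_of_real (det (jac (\<lambda>l'. G l' x) l))"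
proof -
  have "comm_mat hb G l x = (\<chi> K. (\<i> * complex_of_real hb) *s (\<chi> I. complex_of_real (jac (\<lambda>l'. G l' x) l $ K $ I)))"
    unfolding comm_mat_def by (simp add: vec_eq_iff mult.assoc)
  then show ?thesis
    by (simp add: det_rows_mul det_of_real[symmetric])
qed

lemma ip_eq:
  fixes \<phi> \<psi> :: "real^'k \<Rightarrow> real^'m \<Rightarrow> complex"
  assumes ip_int: "integrable lborel
                   (\<lambda>p. cnj (\<psi> (fst p) (snd p)) * phys_proj S hb \<phi> (fst p) (snd p))"
  shows "phys_ip S hb \<psi> \<phi> = complex_of_real ((1 / (2 * pi * hb)) ^ CARD('k)) *
     (\<integral>x. cnj (PhiF S hb \<psi> x) * PhiF S hb \<phi> x \<partial>lborel)"
proof -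
  define c where "c = complex_of_real ((1 / (2 * pi * hb)) ^ CARD('k))"
  define f where "f = (\<lambda>l x. cnj (\<psi> l x) * phys_proj S hb \<phi> l x)"
  have cp: "(\<lambda>p. cnj (\<psi> (fst p) (snd p)) * phys_proj S hb \<phi> (fst p) (snd p)) = case_prod f"
    unfolding f_def by (auto simp: fun_eq_iff)
  have int2: "integrable (lborel \<Otimes>\<^sub>M lborel) (case_prod f)"
    using ip_int unfolding cp lborel_prod .
  have "phys_ip S hb \<psi> \<phi> = integral\<^sup>L (lborel \<Otimes>\<^sub>M lborel) (case_prod f)"
    unfolding phys_ip_def cp lborel_prod ..
  also have "\<dots> = (\<integral>x. (\<integral>l. f l x \<partial>lborel) \<partial>lborel)"
    by (rule lborel_pair.integral_snd[OF int2, symmetric])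
  also have "\<dots> = (\<integral>x. c * (cnj (PhiF S hb \<psi> x) * PhiF S hb \<phi> x) \<partial>lborel)"
  proof (rule Bochner_Integration.integral_cong[OF refl])
    fix x
    have "(\<integral>l. f l x \<partial>lborel) = (\<integral>l. (c * PhiF S hb \<phi> x) *
             cnj (exp (- \<i> * complex_of_real (S l x / hb)) * \<psi> l x) \<partial>lborel)"
      unfolding f_def proj_eq c_def[symmetric]
      by (rule Bochner_Integration.integral_cong[OF refl]) (simp add: exp_cnj algebra_simps)
    also have "\<dots> = (c * PhiF S hb \<phi> x) * cnj (\<integral>l. exp (- \<i> * complex_of_real (S l x / hb)) * \<psi> l x \<partial>lborel)"
      by (simp only: integral_mult_right_zero Bochner_Integration.integral_cnj)
    also have "\<dots> = c * (cnj (PhiF S hb \<psi> x) * PhiF S hb \<phi> x)"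
      unfolding PhiF_def by (simp add: algebra_simps)
    finally show "(\<integral>l. f l x \<partial>lborel) = c * (cnj (PhiF S hb \<psi> x) * PhiF S hb \<phi> x)" .
  qed
  also have "\<dots> = c * (\<integral>x. cnj (PhiF S hb \<psi> x) * PhiF S hb \<phi> x \<partial>lborel)"
    by simp
  finally show ?thesis unfolding c_def .
qed

lemma fp_eq:
  fixes \<phi> \<psi> :: "real^'k \<Rightarrow> real^'m \<Rightarrow> complex"
    and G :: "real^'k \<Rightarrow> real^'m \<Rightarrow> real^'k"
  assumes hb: "hb > 0" and G: "gauge_ok G"
  shows "fp_ip S hb G \<psi> \<phi> = complex_of_real ((1 / (2 * pi * hb)) ^ CARD('k)) *
     (\<integral>x. cnj (PhiF S hb \<psi> x) * PhiF S hb \<phi> x \<partial>lborel)"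
proof -
  define c where "c = ((1 / (2 * pi * hb)) ^ CARD('k))"
  define Q where "Q = (\<lambda>x. cnj (PhiF S hb \<psi> x) * PhiF S hb \<phi> x)"
  have pt: "delta_pull (\<lambda>l. G l x)
              (\<lambda>l. complex_of_real (cmod (det (comm_mat hb G l x)))
                    * cnj (phys_proj S hb \<psi> l x) * phys_proj S hb \<phi> l x)
          = complex_of_real (hb ^ CARD('k) * c^2) * Q x" for x
  proof -
    obtain l0 where l0: "G l0 x = 0" and un: "\<And>l. G l x = 0 \<Longrightarrow> l = l0"
      using G unfolding gauge_ok_def by metis
    have nz: "det (jac (\<lambda>l'. G l' x) l0) \<noteq> 0"
      using G l0 unfolding gauge_ok_def by blast
    have set: "{c. G c x = 0} = {l0}" using l0 un by blast
    have cm: "cmod (det (comm_mat hb G l0 x)) = hb ^ CARD('k) * \<bar>det (jac (\<lambda>l'. G l' x) l0)\<bar>"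
      unfolding det_comm using hb by (simp add: norm_mult norm_power)
    have Qx: "cnj (PhiF S hb \<psi> x) * PhiF S hb \<phi> x = Q x" unfolding Q_def ..
    have pq: "cnj (phys_proj S hb \<psi> l x) * phys_proj S hb \<phi> l x = complex_of_real (c^2) * Q x" for l
      unfolding c_def Q_def by (rule prod_eq)
    have sg: "\<And>f :: real^'k \<Rightarrow> complex. sum f {l0} = f l0" by simp
    have nz': "complex_of_real \<bar>det (jac (\<lambda>l'. G l' x) l0)\<bar> \<noteq> 0" using nz by simp
    have "delta_pull (\<lambda>l. G l x)
              (\<lambda>l. complex_of_real (cmod (det (comm_mat hb G l x)))
                    * cnj (phys_proj S hb \<psi> l x) * phys_proj S hb \<phi> l x)
       = complex_of_real (hb ^ CARD('k) * \<bar>det (jac (\<lambda>l'. G l' x) l0)\<bar>) * (complex_of_real (c^2) * Q x)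
          / complex_of_real \<bar>det (jac (\<lambda>l'. G l' x) l0)\<bar>"
    proof -
      have fx: "complex_of_real (hb ^ CARD('k) * \<bar>det (jac (\<lambda>l'. G l' x) l0)\<bar>)
                    * cnj (phys_proj S hb \<psi> l0 x) * phys_proj S hb \<phi> l0 x
         = complex_of_real (hb ^ CARD('k) * \<bar>det (jac (\<lambda>l'. G l' x) l0)\<bar>) * (complex_of_real (c^2) * Q x)"
      proof -
        have "complex_of_real (hb ^ CARD('k) * \<bar>det (jac (\<lambda>l'. G l' x) l0)\<bar>)
                    * cnj (phys_proj S hb \<psi> l0 x) * phys_proj S hb \<phi> l0 x
           = complex_of_real (hb ^ CARD('k) * \<bar>det (jac (\<lambda>l'. G l' x) l0)\<bar>)
                    * (cnj (phys_proj S hb \<psi> l0 x) * phys_proj S hb \<phi> l0 x)"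
          by (rule mult.assoc)
        also have "cnj (phys_proj S hb \<psi> l0 x) * phys_proj S hb \<phi> l0 x = complex_of_real (c^2) * Q x"
          by (rule pq)
        finally show ?thesis .
      qed
      show ?thesis apply (unfold delta_pull_def set sg cm) apply (subst fx) apply (rule refl) done
    qed
    also have "\<dots> = complex_of_real (hb ^ CARD('k) * c^2) * Q x"
      unfolding of_real_mult[of "hb ^ CARD('k)"] of_real_mult[of "hb ^ CARD('k)" "c^2"] by (rule gen1[OF nz'])
    finally show ?thesis .
  qed
  have "fp_ip S hb G \<psi> \<phi> = complex_of_real ((2 * pi) ^ CARD('k)) *
          (\<integral>x. complex_of_real (hb ^ CARD('k) * c^2) * Q x \<partial>lborel)"
    unfolding fp_ip_def pt ..
  also have "\<dots> = complex_of_real ((2 * pi) ^ CARD('k) * hb ^ CARD('k) * c^2) * (\<integral>x. Q x \<partial>lborel)"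
    by simp
  also have "(2 * pi) ^ CARD('k) * hb ^ CARD('k) * c^2 = c"
  proof -
    have "(2 * pi) ^ CARD('k) * hb ^ CARD('k) = (2 * pi * hb) ^ CARD('k)"
      by (simp add: power_mult_distrib)
    moreover have "(2 * pi * hb) ^ CARD('k) * c^2 = c"
      unfolding c_def by (rule gen2) (use hb in simp)
    ultimately show ?thesis by simp
  qed
  finally show ?thesis unfolding c_def Q_def .
qed

theorem lemma2:
  fixes S :: "real^'k \<Rightarrow> real^'m \<Rightarrow> real"
    and G :: "real^'k \<Rightarrow> real^'m \<Rightarrow> real^'k"
    and \<psi> \<phi> :: "real^'k \<Rightarrow> real^'m \<Rightarrow> complex"
    and hb :: real
  assumes hb: "hb > 0"
    and S_diff: "\<forall>p. (\<lambda>q. S (fst q) (snd q)) differentiable (at p)"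
    and G_ok: "gauge_ok G"
    and psi_L2: "integrable lborel (\<lambda>p. (cmod (\<psi> (fst p) (snd p)))\<^sup>2)"
    and phi_L2: "integrable lborel (\<lambda>p. (cmod (\<phi> (fst p) (snd p)))\<^sup>2)"
    and psi_L1: "integrable lborel (\<lambda>p. \<psi> (fst p) (snd p))"
    and phi_L1: "integrable lborel (\<lambda>p. \<phi> (fst p) (snd p))"
    and ip_int: "integrable lborel
                   (\<lambda>p. cnj (\<psi> (fst p) (snd p)) * phys_proj S hb \<phi> (fst p) (snd p))"
  shows "phys_ip S hb \<psi> \<phi> = fp_ip S hb G \<psi> \<phi>
    \<and> (\<forall>l. phys_ip S hb \<psi> \<phi> =
            complex_of_real ((2 * pi * hb) ^ CARD('k)) *
              (\<integral>x. cnj (phys_proj S hb \<psi> l x) * phys_proj S hb \<phi> l x \<partial>lborel))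
    \<and> (\<forall>l l' x. cnj (phys_proj S hb \<psi> l x) * phys_proj S hb \<phi> l x
               = cnj (phys_proj S hb \<psi> l' x) * phys_proj S hb \<phi> l' x)
    \<and> (\<forall>G'. gauge_ok G' \<longrightarrow> fp_ip S hb G' \<psi> \<phi> = fp_ip S hb G \<psi> \<phi>)"
proof -
  note I = ip_eq[OF ip_int]
  have A: "\<forall>l. phys_ip S hb \<psi> \<phi> =
            complex_of_real ((2 * pi * hb) ^ CARD('k)) *
              (\<integral>x. cnj (phys_proj S hb \<psi> l x) * phys_proj S hb \<phi> l x \<partial>lborel)"
  proof
    fix l
    have "(2 * pi * hb) ^ CARD('k) * ((1 / (2 * pi * hb)) ^ CARD('k))\<^sup>2 = (1 / (2 * pi * hb)) ^ CARD('k)"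
      by (rule gen2) (use hb in simp)
    then show "phys_ip S hb \<psi> \<phi> =
            complex_of_real ((2 * pi * hb) ^ CARD('k)) *
              (\<integral>x. cnj (phys_proj S hb \<psi> l x) * phys_proj S hb \<phi> l x \<partial>lborel)"
      unfolding I prod_eq
      by (subst integral_mult_right_zero, subst mult.assoc[symmetric], subst of_real_mult[symmetric]) simp
  qed
  have B: "\<forall>G'. gauge_ok G' \<longrightarrow> fp_ip S hb G' \<psi> \<phi> = fp_ip S hb G \<psi> \<phi>"
  proof (intro allI impI)
    fix G' :: "real^'k \<Rightarrow> real^'m \<Rightarrow> real^'k"
    assume "gauge_ok G'"
    then show "fp_ip S hb G' \<psi> \<phi> = fp_ip S hb G \<psi> \<phi>"
      using fp_eq[OF hb, of G' S \<psi> \<phi>] fp_eq[OF hb G_ok, of S \<psi> \<phi>] by simp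
  qed
  show ?thesis
    using I A B fp_eq[OF hb G_ok, of S \<psi> \<phi>] by (simp add: prod_eq)
qed

end
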